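(* Suppose the expanded system is time-invariant. Let $\tilde\beta\in(0,1)$ and $K\in\mathbb{R}^{m\times n}$. If there exist symmetric positive definite $P^{(k)}\in\mathbb{R}^{\tilde n\times\tilde n}$ for $k\in\{1,\dots,N\}$ and $G\in\mathbb{R}^{\tilde n\times\tilde n}$ such that $$\begin{bmatrix}\tilde\beta^2P^{(k)} & \mathcal{C}(F^{(k)}(K))^\top G\\ G^\top\mathcal{C}(F^{(k)}(K)) & G^\top+G-P^{(k)}\end{bmatrix}\succeq0\quad\text{for all }k\in\{1,\dots,N\},$$ then the expanded system $\tilde x_{t+1}=\mathcal{C}(F(\tilde\theta_t,K))\tilde x_t$ with this gain $K$ is exponentially robustly stable with rate $\tilde\beta$.
   Context: Let $n,m,N$ be positive integers, $\tilde n=n(n+1)/2$. $\mathrm{vec}$ stacks columns; $\mathrm{vech}(X)$ stacks columnwise the entries on and below the diagonal of square $X$. $E_e\in\mathbb{R}^{\tilde n\times n^2}$ satisfies $E_e\mathrm{vec}(X)=\mathrm{vech}(X)$ for all $X\in\mathbb{R}^{n\times n}$, $D\in\mathbb{R}^{n^2\times\tilde n}$ satisfies $D\mathrm{vech}(Y)=\mathrm{vec}(Y)$ for all symmetric $Y$, and $\mathcal{C}(Y):=E_eYD$. Given symmetric $M^{(1)},\dots,M^{(N)}\in\mathbb{R}^{n(n+m)\times n(n+m)}$ (vertices of the second moment of $\mathrm{vec}([A_t,B_t])$ of an SMP system $x_{t+1}=A_t(\theta_t)x_t+B_t(\theta_t)u_t$ with $\mathrm{E}[v_tv_t^\top|\theta]=\sum_k[\phi(\theta_t)]_kM^{(k)}$,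 $\phi:\mathbb{S}_\theta\to\mathbb{P}_N=\{\varphi\in\mathbb{R}^N:\varphi_k\ge0,\sum\varphi_k=1\}$), partition $M^{(k)}$ into blocks $M^{(k)}_{i,j}\in\mathbb{R}^{n\times n}$, $i,j\le n+m$. Column $n(j-1)+i$ of $F^{(k)}_{aa}\in\mathbb{R}^{n^2\times n^2}$ is $\mathrm{vec}(M^{(k)}_{i,j})$; column $m(j-1)+i'$ of $F^{(k)}_{ab}\in\mathbb{R}^{n^2\times nm}$ is $\mathrm{vec}(M^{(k)}_{n+i',j})$; column $n(j'-1)+i$ of $F^{(k)}_{ba}\in\mathbb{R}^{n^2\times nm}$ is $\mathrm{vec}(M^{(k)}_{i,n+j'})$; column $m(j'-1)+i'$ of $F^{(k)}_{bb}\in\mathbb{R}^{n^2\times m^2}$ is $\mathrm{vec}(M^{(k)}_{n+i',n+j'})$ ($i,j\le n$, $i',j'\le m$). $F^{(k)}(K):=F^{(k)}_{aa}-F^{(k)}_{ab}(I_n\otimes K)-F^{(k)}_{ba}(K\otimes I_n)+F^{(k)}_{bb}(K\otimes K)$, $F(\tilde\theta,K):=\sum_{k=1}^N[\tilde\theta]_kF^{(k)}(K)$. The expanded system is $\tilde x_{t+1}=\mathcal{C}(F(\tilde\theta_t,K))\tilde x_t$, $\tilde x_t\in\mathbb{R}^{\tilde n}$, $\tilde\theta_t\in\tilde{\mathbb{S}}:=\phi(\mathbb{S}_\theta)\subseteq\mathbb{P}_N$. Time-invariant means $\tilde\theta_t=\tilde\theta$ is constant in $t$ (so parameter sequences are constant).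 Exponentially robustly stable with rate $\tilde\beta$: there is $\tilde\alpha\in(0,\infty)$ with $\|\tilde x_t\|\le\tilde\alpha\|\tilde x_0\|\tilde\beta^t$ for all $\tilde x_0\in\mathbb{R}^{\tilde n}$, all admissible parameter sequences in $\tilde{\mathbb{S}}$, and all $t\ge0$. *)

theory Defs
  imports "Jordan_Normal_Form.Matrix"
begin

text \<open>Matrices are Jordan_Normal_Form matrices (real mat) with explicit dimensions;
  all indices are 0-based (paper index i corresponds to i-1 here).\<close>

definition vecm :: "real mat \<Rightarrow> real vec" where
  "vecm X = vec (dim_row X * dim_col X) (\<lambda>r. X $$ (r mod dim_row X, r div dim_row X))"

definition vech :: "real mat \<Rightarrow> real vec" where
  "vech X = vec_of_list (concat (map (\<lambda>j. map (\<lambda>i. X $$ (i, j)) [j..<dim_row X]) [0..<dim_row X]))"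

definition kron :: "real mat \<Rightarrow> real mat \<Rightarrow> real mat" where
  "kron A B = mat (dim_row A * dim_row B) (dim_col A * dim_col B)
     (\<lambda>(i, j). A $$ (i div dim_row B, j div dim_col B) * B $$ (i mod dim_row B, j mod dim_col B))"

definition blk :: "nat \<Rightarrow> real mat \<Rightarrow> nat \<Rightarrow> nat \<Rightarrow> real mat" where
  "blk n M i j = mat n n (\<lambda>(a, b). M $$ (n * i + a, n * j + b))"

definition Faa :: "nat \<Rightarrow> real mat \<Rightarrow> real mat" where
  "Faa n M = mat (n^2) (n^2) (\<lambda>(r, c). vecm (blk n M (c mod n) (c div n)) $ r)"

definition Fab :: "nat \<Rightarrow> nat \<Rightarrow> real mat \<Rightarrow> real mat" where
  "Fab n m M = mat (n^2) (n * m) (\<lambda>(r, c). vecm (blk n M (n + c mod m) (c div m)) $ r)"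

definition Fba :: "nat \<Rightarrow> nat \<Rightarrow> real mat \<Rightarrow> real mat" where
  "Fba n m M = mat (n^2) (n * m) (\<lambda>(r, c). vecm (blk n M (c mod n) (n + c div n)) $ r)"

definition Fbb :: "nat \<Rightarrow> nat \<Rightarrow> real mat \<Rightarrow> real mat" where
  "Fbb n m M = mat (n^2) (m^2) (\<lambda>(r, c). vecm (blk n M (n + c mod m) (n + c div m)) $ r)"

definition Fk :: "nat \<Rightarrow> nat \<Rightarrow> real mat \<Rightarrow> real mat \<Rightarrow> real mat" where
  "Fk n m M K = Faa n M - Fab n m M * kron (1\<^sub>m n) K - Fba n m M * kron K (1\<^sub>m n)
               + Fbb n m M * kron K K"

definition Fth :: "nat \<Rightarrow> nat \<Rightarrow> nat \<Rightarrow> (nat \<Rightarrow> real mat) \<Rightarrow> real vec \<Rightarrow> real mat \<Rightarrow> real mat" where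
  "Fth n m N M th K = mat (n^2) (n^2) (\<lambda>ij. \<Sum>k<N. th $ k * Fk n m (M k) K $$ ij)"

definition Cop :: "real mat \<Rightarrow> real mat \<Rightarrow> real mat \<Rightarrow> real mat" where
  "Cop Ee D Y = Ee * Y * D"

definition simplex :: "nat \<Rightarrow> real vec set" where
  "simplex N = {v \<in> carrier_vec N. (\<forall>k<N. 0 \<le> v $ k) \<and> (\<Sum>k<N. v $ k) = 1}"

definition symmetric_mat :: "real mat \<Rightarrow> bool" where
  "symmetric_mat A \<longleftrightarrow> A\<^sup>T = A"

definition psd :: "nat \<Rightarrow> real mat \<Rightarrow> bool" where
  "psd d A \<longleftrightarrow> A \<in> carrier_mat d d \<and> symmetric_mat A \<and> (\<forall>x \<in> carrier_vec d. 0 \<le> x \<bullet> (A *\<^sub>v x))"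

definition pd :: "nat \<Rightarrow> real mat \<Rightarrow> bool" where
  "pd d A \<longleftrightarrow> A \<in> carrier_mat d d \<and> symmetric_mat A \<and>
     (\<forall>x \<in> carrier_vec d. x \<noteq> 0\<^sub>v d \<longrightarrow> 0 < x \<bullet> (A *\<^sub>v x))"

definition enorm :: "real vec \<Rightarrow> real" where
  "enorm x = sqrt (x \<bullet> x)"

end

theory Submission
  imports Defs "HOL-Analysis.Function_Topology"
begin

definition bil :: "nat \<Rightarrow> real mat \<Rightarrow> real vec \<Rightarrow> real vec \<Rightarrow> real" where
  "bil d B u v = (\<Sum>i<d. \<Sum>j<d. u $ i * B $$ (i,j) * v $ j)"

lemma bil_eq: assumes "B \<in> carrier_mat d d" "u \<in> carrier_vec d" "v \<in> carrier_vec d"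
  shows "u \<bullet> (B *\<^sub>v v) = bil d B u v"
  using assms unfolding bil_def scalar_prod_def
  by (auto simp: scalar_prod_def atLeast0LessThan sum_distrib_left mult.assoc intro!: sum.cong)

lemma compact_box: "compact (PiE UNIV (\<lambda>i::nat. if i < d then {-1..1::real} else {0}))"
proof -
  have A: "\<forall>i\<in>UNIV. compactin euclidean (if i < (d::nat) then {-1..1::real} else {0})"
    by (simp add: compactin_euclidean_iff)
  have "compactin (product_topology (\<lambda>_. euclidean) UNIV) (PiE UNIV (\<lambda>i::nat. if i < d then {-1..1::real} else {0}))"
    using A by (simp only: compactin_PiE) blast
  then show ?thesis by (simp add: euclidean_product_topology compactin_euclidean_iff)
qed

lemma cont_sum_sq: "continuous_on UNIV (\<lambda>f::nat\<Rightarrow>real. \<Sum>i<d. (f i)^2)"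
  by (intro continuous_on_sum continuous_on_mult continuous_on_power continuous_on_const continuous_on_product_coordinates)

lemma cont_q: "continuous_on UNIV (\<lambda>f::nat\<Rightarrow>real. \<Sum>i<d. \<Sum>j<d. f i * B $$ (i,j) * f j)"
  by (intro continuous_on_sum continuous_on_mult continuous_on_power continuous_on_const continuous_on_product_coordinates)

lemma self_scalar: "(x::real vec) \<in> carrier_vec d \<Longrightarrow> x \<bullet> x = (\<Sum>i<d. (x $ i)^2)"
  unfolding power2_eq_square by (simp add: scalar_prod_def atLeast0LessThan)

lemma quad_bounds:
  assumes "pd d P"
  shows "\<exists>c>0. \<exists>C>0. \<forall>x\<in>carrier_vec d. c * (x \<bullet> x) \<le> x \<bullet> (P *\<^sub>v x) \<and> x \<bullet> (P *\<^sub>v x) \<le> C * (x \<bullet> x)"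
proof -
  have Pc: "P \<in> carrier_mat d d" using assms unfolding pd_def by auto
  define q where "q = (\<lambda>f::nat\<Rightarrow>real. \<Sum>i<d. \<Sum>j<d. f i * P $$ (i,j) * f j)"
  have qx: "x \<bullet> (P *\<^sub>v x) = q (\<lambda>i. x $ i)" if "x \<in> carrier_vec d" for x
    using bil_eq[OF Pc that that] unfolding bil_def q_def by simp
  show ?thesis
  proof (cases "d = 0")
    case True
    have "x \<bullet> x = 0 \<and> x \<bullet> (P *\<^sub>v x) = 0" if "x \<in> carrier_vec d" for x
      using qx[OF that] self_scalar[OF that] True by (simp add: q_def)
    then have H: "\<forall>x\<in>carrier_vec d. 1 * (x \<bullet> x) \<le> x \<bullet> (P *\<^sub>v x) \<and> x \<bullet> (P *\<^sub>v x) \<le> 1 * (x \<bullet> x)"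
      by simp
    show ?thesis
      by (rule exI[where x=1], rule conjI, simp, rule exI[where x=1], rule conjI, simp, rule H)
  next
    case False
    define S where "S = PiE UNIV (\<lambda>i. if i<d then {-1..1::real} else {0}) \<inter> {f. (\<Sum>i<d. (f i)^2) = 1}"
    have cS: "compact S" unfolding S_def
      by (intro compact_Int_closed compact_box closed_Collect_eq cont_sum_sq continuous_on_const)
    define e where "e = (\<lambda>i::nat. if i = 0 then 1 else (0::real))"
    have "(\<Sum>i<d. (e i)^2) = (\<Sum>i<d. e i)"
      by (intro sum.cong) (auto simp: e_def)
    also have "\<dots> = 1" using False unfolding e_def by (simp add: sum.delta)
    finally have "e \<in> S" unfolding S_def using False by (auto simp: e_def)
    then have Sne: "S \<noteq> {}" by auto
    have cq: "continuous_on S q" unfolding q_def by (rule continuous_on_subset[OF cont_q]) auto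
    obtain f0 where f0: "f0 \<in> S" "\<And>y. y \<in> S \<Longrightarrow> q f0 \<le> q y"
      using continuous_attains_inf[OF cS Sne cq] by auto
    obtain f1 where f1: "f1 \<in> S" "\<And>y. y \<in> S \<Longrightarrow> q y \<le> q f1"
      using continuous_attains_sup[OF cS Sne cq] by auto
    have qpos: "0 < q f" if "f \<in> S" for f
    proof -
      define xf where "xf = vec d f"
      have xfc: "xf \<in> carrier_vec d" unfolding xf_def by simp
      have "xf \<bullet> xf = 1" using that self_scalar[OF xfc] unfolding S_def xf_def by simp
      then have "xf \<noteq> 0\<^sub>v d" by auto
      then have "0 < xf \<bullet> (P *\<^sub>v xf)" using assms xfc unfolding pd_def by auto
      also have "\<dots> = q (\<lambda>i. xf $ i)" by (rule qx[OF xfc])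
      also have "\<dots> = q f" unfolding q_def xf_def by (intro sum.cong) auto
      finally show ?thesis .
    qed
    define c where "c = q f0"
    define C where "C = max (q f1) 1"
    have cpos: "c > 0" unfolding c_def using qpos[OF f0(1)] .
    have Cpos: "C > 0" unfolding C_def by simp
    have "c * (x \<bullet> x) \<le> x \<bullet> (P *\<^sub>v x) \<and> x \<bullet> (P *\<^sub>v x) \<le> C * (x \<bullet> x)"
      if xc: "x \<in> carrier_vec d" for x
    proof -
      define s where "s = (\<Sum>i<d. (x $ i)^2)"
      have xx: "x \<bullet> x = s" using self_scalar[OF xc] s_def by simp
      have s0: "s \<ge> 0" unfolding s_def by (intro sum_nonneg) auto
      show ?thesis
      proof (cases "s = 0")
        case True
        then have "\<forall>i\<in>{..<d}. (x $ i)^2 = 0" unfolding s_def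
          by (subst sum_nonneg_eq_0_iff[symmetric]) auto
        then have "q (\<lambda>i. x $ i) = 0" unfolding q_def by simp
        then show ?thesis using qx[OF xc] xx True by simp
      next
        case False
        define r where "r = sqrt s"
        have rpos: "r > 0" using s0 False unfolding r_def by simp
        have rr: "r * r = s" using s0 unfolding r_def by simp
        define g where "g = (\<lambda>i. if i < d then x $ i / r else 0)"
        have gb: "\<bar>x $ i / r\<bar> \<le> 1" if "i < d" for i
        proof -
          have "(x $ i)^2 \<le> s" unfolding s_def
            by (rule member_le_sum) (use that in auto)
          then have "sqrt ((x $ i)^2) \<le> r" unfolding r_def by (rule real_sqrt_le_mono)
          then have "\<bar>x $ i\<bar> \<le> r" by simp
          have "\<bar>x $ i / r\<bar> = \<bar>x $ i\<bar> / r" using rpos by (simp add: abs_divide)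
          also have "\<dots> \<le> r / r" using rpos \<open>\<bar>x $ i\<bar> \<le> r\<close> by (intro divide_right_mono) auto
          also have "\<dots> = 1" using rpos by simp
          finally show ?thesis .
        qed
        have "(\<Sum>i<d. (g i)^2) = (\<Sum>i<d. (x $ i)^2 / (r * r))"
          by (intro sum.cong) (auto simp: g_def power_divide power2_eq_square)
        also have "\<dots> = 1" using rr False by (simp add: sum_divide_distrib[symmetric] s_def)
        moreover have gb': "-1 \<le> x $ i / r \<and> x $ i / r \<le> 1" if "i < d" for i
          using gb[OF that] unfolding abs_le_iff by linarith
        ultimately have "g \<in> S" unfolding S_def by (auto simp: g_def dest: gb')
        have qg: "q g = q (\<lambda>i. x $ i) / s"
        proof -
          have "q g = (\<Sum>i<d. \<Sum>j<d. x $ i * P $$ (i,j) * x $ j / (r * r))"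
            unfolding q_def by (intro sum.cong) (auto simp: g_def)
          also have "\<dots> = q (\<lambda>i. x $ i) / s"
            unfolding q_def rr by (simp add: sum_divide_distrib)
          finally show ?thesis .
        qed
        have spos: "s > 0" using s0 False by simp
        have "c \<le> q (\<lambda>i. x $ i) / s" using f0(2)[OF \<open>g \<in> S\<close>] qg c_def by simp
        then have 1: "c * s \<le> q (\<lambda>i. x $ i)" using spos by (simp add: le_divide_eq)
        have "q (\<lambda>i. x $ i) / s \<le> C" using f1(2)[OF \<open>g \<in> S\<close>] qg C_def by simp
        then have 2: "q (\<lambda>i. x $ i) \<le> C * s" using spos by (simp add: divide_le_eq)
        show ?thesis using 1 2 qx[OF xc] xx by simp
      qed
    qed
    then have H: "\<forall>x\<in>carrier_vec d. c * (x \<bullet> x) \<le> x \<bullet> (P *\<^sub>v x) \<and> x \<bullet> (P *\<^sub>v x) \<le> C * (x \<bullet> x)"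
      by blast
    show ?thesis
      by (rule exI[where x=c], rule conjI, rule cpos, rule exI[where x=C], rule conjI, rule Cpos, rule H)
  qed
qed

lemma self_scalar_nonneg: "(x::real vec) \<in> carrier_vec d \<Longrightarrow> 0 \<le> x \<bullet> x"
  using self_scalar[of x d] by (simp add: sum_nonneg)

lemma smult_quad: fixes P :: "real mat" and b :: real assumes "P \<in> carrier_mat d d" "u \<in> carrier_vec d"
  shows "u \<bullet> ((b \<cdot>\<^sub>m P) *\<^sub>v u) = b * (u \<bullet> (P *\<^sub>v u))"
proof -
  have "u \<bullet> ((b \<cdot>\<^sub>m P) *\<^sub>v u) = bil d (b \<cdot>\<^sub>m P) u u" using assms by (intro bil_eq) auto
  also have "\<dots> = b * bil d P u u" unfolding bil_def using assms
    by (auto simp: sum_distrib_left mult_ac intro!: sum.cong)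
  also have "\<dots> = b * (u \<bullet> (P *\<^sub>v u))" using bil_eq[OF assms(1,2,2)] by simp
  finally show ?thesis .
qed

lemma transp_quad: fixes A :: "real mat" assumes "A \<in> carrier_mat d d" "u \<in> carrier_vec d" "y \<in> carrier_vec d"
  shows "u \<bullet> (A\<^sup>T *\<^sub>v y) = y \<bullet> (A *\<^sub>v u)"
proof -
  have "u \<bullet> (A\<^sup>T *\<^sub>v y) = (A\<^sup>T *\<^sub>v y) \<bullet> u" using assms by (intro comm_scalar_prod[of _ d]) auto
  also have "\<dots> = y \<bullet> (A *\<^sub>v u)" using assms by (intro transpose_vec_mult_scalar) auto
  finally show ?thesis .
qed

lemma lmi_expand:
  fixes P A G :: "real mat" and b :: real
  assumes P: "P \<in> carrier_mat d d" and A: "A \<in> carrier_mat d d" and G: "G \<in> carrier_mat d d"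
    and u: "u \<in> carrier_vec d" and v: "v \<in> carrier_vec d"
  shows "(u @\<^sub>v v) \<bullet> (four_block_mat (b \<cdot>\<^sub>m P) (A\<^sup>T * G) (G\<^sup>T * A) (G\<^sup>T + G - P) *\<^sub>v (u @\<^sub>v v))
     = b * (u \<bullet> (P *\<^sub>v u)) + 2 * ((G *\<^sub>v v) \<bullet> (A *\<^sub>v u)) + 2 * (v \<bullet> (G *\<^sub>v v)) - v \<bullet> (P *\<^sub>v v)"
proof -
  have Gt: "G\<^sup>T \<in> carrier_mat d d" "A\<^sup>T \<in> carrier_mat d d" using G A by auto
  have Gv: "G *\<^sub>v v \<in> carrier_vec d" "A *\<^sub>v u \<in> carrier_vec d" "P *\<^sub>v u \<in> carrier_vec d" "P *\<^sub>v v \<in> carrier_vec d"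
    using G A P u v by auto
  have Ps: "b \<cdot>\<^sub>m P \<in> carrier_mat d d" by (rule smult_carrier_mat[OF P])
  have AG: "A\<^sup>T * G \<in> carrier_mat d d" by (rule mult_carrier_mat[OF Gt(2) G])
  have GA: "G\<^sup>T * A \<in> carrier_mat d d" by (rule mult_carrier_mat[OF Gt(1) A])
  have GG: "G\<^sup>T + G \<in> carrier_mat d d" by (rule add_carrier_mat[OF G])
  have S: "G\<^sup>T + G - P \<in> carrier_mat d d" by (rule minus_carrier_mat[OF P])
  have v1: "(b \<cdot>\<^sub>m P) *\<^sub>v u \<in> carrier_vec d" by (rule mult_mat_vec_carrier[OF Ps u])
  have v2: "(A\<^sup>T * G) *\<^sub>v v \<in> carrier_vec d" by (rule mult_mat_vec_carrier[OF AG v])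
  have v3: "(G\<^sup>T * A) *\<^sub>v u \<in> carrier_vec d" by (rule mult_mat_vec_carrier[OF GA u])
  have v4: "(G\<^sup>T + G - P) *\<^sub>v v \<in> carrier_vec d" by (rule mult_mat_vec_carrier[OF S v])
  have v5: "G\<^sup>T *\<^sub>v v \<in> carrier_vec d" by (rule mult_mat_vec_carrier[OF Gt(1) v])
  have c1: "(b \<cdot>\<^sub>m P) *\<^sub>v u + (A\<^sup>T * G) *\<^sub>v v \<in> carrier_vec d" by (rule add_carrier_vec[OF v1 v2])
  have c2: "(G\<^sup>T * A) *\<^sub>v u + (G\<^sup>T + G - P) *\<^sub>v v \<in> carrier_vec d" by (rule add_carrier_vec[OF v3 v4])
  have "four_block_mat (b \<cdot>\<^sub>m P) (A\<^sup>T * G) (G\<^sup>T * A) (G\<^sup>T + G - P) *\<^sub>v (u @\<^sub>v v)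
     = ((b \<cdot>\<^sub>m P) *\<^sub>v u + (A\<^sup>T * G) *\<^sub>v v) @\<^sub>v ((G\<^sup>T * A) *\<^sub>v u + (G\<^sup>T + G - P) *\<^sub>v v)"
    by (rule four_block_mat_mult_vec[OF Ps AG GA S u v])
  then have E0: "(u @\<^sub>v v) \<bullet> (four_block_mat (b \<cdot>\<^sub>m P) (A\<^sup>T * G) (G\<^sup>T * A) (G\<^sup>T + G - P) *\<^sub>v (u @\<^sub>v v))
     = u \<bullet> ((b \<cdot>\<^sub>m P) *\<^sub>v u + (A\<^sup>T * G) *\<^sub>v v) + v \<bullet> ((G\<^sup>T * A) *\<^sub>v u + (G\<^sup>T + G - P) *\<^sub>v v)"
    by (simp only:) (rule scalar_prod_append[OF u v c1 c2])
  have E1: "u \<bullet> ((b \<cdot>\<^sub>m P) *\<^sub>v u + (A\<^sup>T * G) *\<^sub>v v) = u \<bullet> ((b \<cdot>\<^sub>m P) *\<^sub>v u) + u \<bullet> ((A\<^sup>T * G) *\<^sub>v v)"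
    by (rule scalar_prod_add_distrib[OF u v1 v2])
  have E2: "u \<bullet> ((b \<cdot>\<^sub>m P) *\<^sub>v u) = b * (u \<bullet> (P *\<^sub>v u))" by (rule smult_quad[OF P u])
  have E3a: "(A\<^sup>T * G) *\<^sub>v v = A\<^sup>T *\<^sub>v (G *\<^sub>v v)" by (rule assoc_mult_mat_vec[OF Gt(2) G v])
  have E3b: "u \<bullet> (A\<^sup>T *\<^sub>v (G *\<^sub>v v)) = (G *\<^sub>v v) \<bullet> (A *\<^sub>v u)" by (rule transp_quad[OF A u Gv(1)])
  have E4: "v \<bullet> ((G\<^sup>T * A) *\<^sub>v u + (G\<^sup>T + G - P) *\<^sub>v v) = v \<bullet> ((G\<^sup>T * A) *\<^sub>v u) + v \<bullet> ((G\<^sup>T + G - P) *\<^sub>v v)"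
    by (rule scalar_prod_add_distrib[OF v v3 v4])
  have E5a: "(G\<^sup>T * A) *\<^sub>v u = G\<^sup>T *\<^sub>v (A *\<^sub>v u)" by (rule assoc_mult_mat_vec[OF Gt(1) A u])
  have E5b: "v \<bullet> (G\<^sup>T *\<^sub>v (A *\<^sub>v u)) = (A *\<^sub>v u) \<bullet> (G *\<^sub>v v)" by (rule transp_quad[OF G v Gv(2)])
  have E5c: "(A *\<^sub>v u) \<bullet> (G *\<^sub>v v) = (G *\<^sub>v v) \<bullet> (A *\<^sub>v u)" by (rule comm_scalar_prod[OF Gv(2) Gv(1)])
  have E6a: "(G\<^sup>T + G - P) *\<^sub>v v = G\<^sup>T *\<^sub>v v + G *\<^sub>v v - P *\<^sub>v v"
  proof -
    from GG have "(G\<^sup>T + G - P) *\<^sub>v v = (G\<^sup>T + G) *\<^sub>v v - P *\<^sub>v v"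
      by (rule minus_mult_distrib_mat_vec[OF _ P v])
    also have "(G\<^sup>T + G) *\<^sub>v v = G\<^sup>T *\<^sub>v v + G *\<^sub>v v"
      by (rule add_mult_distrib_mat_vec[OF Gt(1) G v])
    finally show ?thesis .
  qed
  have E6b: "v \<bullet> (G\<^sup>T *\<^sub>v v + G *\<^sub>v v - P *\<^sub>v v) = v \<bullet> (G\<^sup>T *\<^sub>v v + G *\<^sub>v v) - v \<bullet> (P *\<^sub>v v)"
    by (rule scalar_prod_minus_distrib[OF v add_carrier_vec[OF v5 Gv(1)] Gv(4)])
  have E6c: "v \<bullet> (G\<^sup>T *\<^sub>v v + G *\<^sub>v v) = v \<bullet> (G\<^sup>T *\<^sub>v v) + v \<bullet> (G *\<^sub>v v)"
    by (rule scalar_prod_add_distrib[OF v v5 Gv(1)])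
  have E6d: "v \<bullet> (G\<^sup>T *\<^sub>v v) = v \<bullet> (G *\<^sub>v v)" by (rule transp_quad[OF G v v])
  show ?thesis
    unfolding E0 E1 E4 unfolding E2 E3a E3b E5a E5b E5c E6a E6b E6c E6d by simp
qed

lemma Fk_carrier: assumes K: "K \<in> carrier_mat m n" shows "Fk n m M K \<in> carrier_mat (n^2) (n^2)"
proof -
  have d: "dim_row K = m" "dim_col K = n" using K by auto
  have "Faa n M \<in> carrier_mat (n^2) (n^2)" unfolding Faa_def by simp
  moreover have "Fab n m M * kron (1\<^sub>m n) K \<in> carrier_mat (n^2) (n^2)"
    unfolding Fab_def kron_def carrier_mat_def using d by (simp add: power2_eq_square)
  moreover have "Fba n m M * kron K (1\<^sub>m n) \<in> carrier_mat (n^2) (n^2)"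
    unfolding Fba_def kron_def carrier_mat_def using d by (simp add: power2_eq_square)
  moreover have "Fbb n m M * kron K K \<in> carrier_mat (n^2) (n^2)"
    unfolding Fbb_def kron_def carrier_mat_def using d by (simp add: power2_eq_square)
  ultimately show ?thesis unfolding Fk_def
    by (intro add_carrier_mat minus_carrier_mat) 
qed
lemma triple_entry:
  fixes X Z W :: "real mat"
  assumes "X \<in> carrier_mat a b" "Z \<in> carrier_mat b b" "W \<in> carrier_mat b c" "i < a" "j < c"
  shows "(X * Z * W) $$ (i,j) = (\<Sum>q<b. \<Sum>p<b. X $$ (i,p) * Z $$ (p,q) * W $$ (q,j))"
proof -
  have 1: "(X * Z) $$ (i,q) = (\<Sum>p<b. X $$ (i,p) * Z $$ (p,q))" if "q < b" for q
    using assms that by (auto simp: scalar_prod_def atLeast0LessThan intro!: sum.cong)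
  have "(X * Z * W) $$ (i,j) = row (X * Z) i \<bullet> col W j"
    using assms by (intro index_mult_mat(1)) auto
  also have "\<dots> = (\<Sum>q<b. (X * Z) $$ (i,q) * W $$ (q,j))"
    using assms unfolding scalar_prod_def by (auto simp: atLeast0LessThan intro!: sum.cong)
  also have "\<dots> = (\<Sum>q<b. \<Sum>p<b. X $$ (i,p) * Z $$ (p,q) * W $$ (q,j))"
    using 1 by (auto simp: sum_distrib_right intro!: sum.cong)
  finally show ?thesis .
qed

lemma sum_scale: "(a::real) * (\<Sum>k\<in>S. w k * f k) * b = (\<Sum>k\<in>S. w k * (a * f k * b))"
  unfolding sum_distrib_left sum_distrib_right by (rule sum.cong) (auto simp: ac_simps)

lemma sum_swap3:
  "(\<Sum>k<N. \<Sum>q<b. \<Sum>p<b. f k q p) = (\<Sum>q<b. \<Sum>p<(b::nat). \<Sum>k<(N::nat). (f k q p :: real))"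
  by (subst sum.swap, rule sum.cong[OF refl], rule sum.swap)

lemma cop_lin:
  fixes Ee D Y :: "real mat" and Yk :: "nat \<Rightarrow> real mat"
  assumes Ee: "Ee \<in> carrier_mat a b" and D: "D \<in> carrier_mat b c" and Y: "Y \<in> carrier_mat b b"
    and Yk: "\<forall>k<N. Yk k \<in> carrier_mat b b"
    and ent: "\<forall>p<b. \<forall>q<b. Y $$ (p,q) = (\<Sum>k<N. w k * Yk k $$ (p,q))"
    and ij: "i < a" "j < c"
  shows "(Ee * Y * D) $$ (i,j) = (\<Sum>k<N. w k * (Ee * Yk k * D) $$ (i,j))"
proof -
  have "(Ee * Y * D) $$ (i,j) = (\<Sum>q<b. \<Sum>p<b. Ee $$ (i,p) * Y $$ (p,q) * D $$ (q,j))"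
    by (rule triple_entry[OF Ee Y D ij])
  also have "\<dots> = (\<Sum>q<b. \<Sum>p<b. \<Sum>k<N. w k * (Ee $$ (i,p) * Yk k $$ (p,q) * D $$ (q,j)))"
  proof (intro sum.cong refl)
    fix q p assume "q \<in> {..<b}" "p \<in> {..<b}"
    then show "Ee $$ (i,p) * Y $$ (p,q) * D $$ (q,j) = (\<Sum>k<N. w k * (Ee $$ (i,p) * Yk k $$ (p,q) * D $$ (q,j)))"
      using ent by (simp add: sum_scale)
  qed
  also have "\<dots> = (\<Sum>k<N. \<Sum>q<b. \<Sum>p<b. w k * (Ee $$ (i,p) * Yk k $$ (p,q) * D $$ (q,j)))"
    by (rule sum_swap3[where f="\<lambda>k q p. w k * (Ee $$ (i,p) * Yk k $$ (p,q) * D $$ (q,j))", symmetric])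
  also have "\<dots> = (\<Sum>k<N. w k * (Ee * Yk k * D) $$ (i,j))"
  proof (intro sum.cong refl)
    fix k assume "k \<in> {..<N}"
    then have "Yk k \<in> carrier_mat b b" using Yk by simp
    then show "(\<Sum>q<b. \<Sum>p<b. w k * (Ee $$ (i,p) * Yk k $$ (p,q) * D $$ (q,j))) = w k * (Ee * Yk k * D) $$ (i,j)"
      by (simp only: triple_entry[OF Ee _ D ij] sum_distrib_left)
  qed
  finally show ?thesis .
qed

lemma bil_lin:
  fixes N :: nat and w :: "nat \<Rightarrow> real" and Bk :: "nat \<Rightarrow> real mat"
  assumes ent: "\<forall>i<d. \<forall>j<d. B $$ (i,j) = (\<Sum>k<N. w k * Bk k $$ (i,j))"
  shows "bil d B y u = (\<Sum>k<N. w k * bil d (Bk k) y u)"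
proof -
  have "bil d B y u = (\<Sum>i<d. \<Sum>j<d. \<Sum>k<N. w k * (y $ i * Bk k $$ (i,j) * u $ j))"
    unfolding bil_def
  proof (intro sum.cong refl)
    fix i j assume "i \<in> {..<d}" "j \<in> {..<d}"
    then show "y $ i * B $$ (i,j) * u $ j = (\<Sum>k<N. w k * (y $ i * Bk k $$ (i,j) * u $ j))"
      using ent by (simp add: sum_scale)
  qed
  also have "\<dots> = (\<Sum>k<N. \<Sum>i<d. \<Sum>j<d. w k * (y $ i * Bk k $$ (i,j) * u $ j))"
    by (rule sum_swap3[where f="\<lambda>k i j. w k * (y $ i * Bk k $$ (i,j) * u $ j)", symmetric])
  also have "\<dots> = (\<Sum>k<N. w k * bil d (Bk k) y u)"
    by (simp only: bil_def sum_distrib_left)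
  finally show ?thesis .
qed

lemma bil_neg1:
  assumes w: "(w::real vec) \<in> carrier_vec d" shows "bil d B w (- w) = - bil d B w w"
proof -
  have "bil d B w (- w) = (\<Sum>i<d. \<Sum>j<d. - (w $ i * B $$ (i,j) * w $ j))"
    unfolding bil_def
  proof (intro sum.cong refl)
    fix i j assume "i \<in> {..<d}" "j \<in> {..<d}"
    then have "(- w) $ j = - (w $ j)" using w by simp
    then show "w $ i * B $$ (i,j) * (- w) $ j = - (w $ i * B $$ (i,j) * w $ j)" by simp
  qed
  then show ?thesis by (simp only: bil_def sum_negf)
qed

lemma bil_neg2:
  assumes w: "(w::real vec) \<in> carrier_vec d" shows "bil d B (- w) (- w) = bil d B w w"
  unfolding bil_def
proof (intro sum.cong refl)
  fix i j assume "i \<in> {..<d}" "j \<in> {..<d}"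
  then have "(- w) $ j = - (w $ j)" "(- w) $ i = - (w $ i)" using w by auto
  then show "(- w) $ i * B $$ (i,j) * (- w) $ j = w $ i * B $$ (i,j) * w $ j" by simp
qed

lemma uniform_bounds:
  fixes N :: nat and P :: "nat \<Rightarrow> real mat"
  assumes "\<forall>k<N. pd d (P k)"
  shows "\<exists>c>0. \<exists>C>0. \<forall>k<N. \<forall>x::real vec\<in>carrier_vec d. c * (x \<bullet> x) \<le> x \<bullet> (P k *\<^sub>v x) \<and> x \<bullet> (P k *\<^sub>v x) \<le> C * (x \<bullet> x)"
  using assms
proof (induction N)
  case 0
  show ?case by (rule exI[where x=1], simp, rule exI[where x=1], simp)
next
  case (Suc N)
  then obtain c C where cC: "c > 0" "C > 0"
    "\<forall>k<N. \<forall>x::real vec\<in>carrier_vec d. c * (x \<bullet> x) \<le> x \<bullet> (P k *\<^sub>v x) \<and> x \<bullet> (P k *\<^sub>v x) \<le> C * (x \<bullet> x)"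
    by auto
  obtain c' C' where cC': "c' > 0" "C' > 0"
    "\<forall>x::real vec\<in>carrier_vec d. c' * (x \<bullet> x) \<le> x \<bullet> (P N *\<^sub>v x) \<and> x \<bullet> (P N *\<^sub>v x) \<le> C' * (x \<bullet> x)"
    using quad_bounds[of d "P N"] Suc.prems by auto
  have H: "\<forall>k<Suc N. \<forall>x::real vec\<in>carrier_vec d. min c c' * (x \<bullet> x) \<le> x \<bullet> (P k *\<^sub>v x) \<and> x \<bullet> (P k *\<^sub>v x) \<le> max C C' * (x \<bullet> x)"
  proof (intro allI impI ballI)
    fix k and x :: "real vec" assume k: "k < Suc N" and x: "x \<in> carrier_vec d"
    have xx: "0 \<le> x \<bullet> x" by (rule self_scalar_nonneg[OF x])
    have a: "min c c' * (x \<bullet> x) \<le> c * (x \<bullet> x)" "min c c' * (x \<bullet> x) \<le> c' * (x \<bullet> x)"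
      "C * (x \<bullet> x) \<le> max C C' * (x \<bullet> x)" "C' * (x \<bullet> x) \<le> max C C' * (x \<bullet> x)"
      using xx by (auto intro!: mult_right_mono)
    show "min c c' * (x \<bullet> x) \<le> x \<bullet> (P k *\<^sub>v x) \<and> x \<bullet> (P k *\<^sub>v x) \<le> max C C' * (x \<bullet> x)"
    proof (cases "k < N")
      case True
      then show ?thesis using cC(3) x a by force
    next
      case False
      then have "k = N" using k by simp
      then show ?thesis using cC'(3) x a by force
    qed
  qed
  have m: "0 < min c c'" "0 < max C C'" using cC cC' by auto
  show ?case
    apply (rule exI[of _ "min c c'"])
    apply (rule conjI[OF m(1)])
    apply (rule exI[of _ "max C C'"])
    apply (rule conjI[OF m(2)])
    apply (rule H)
    done
qed

theorem theorem4:
  fixes n m N :: nat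
    and M :: "nat \<Rightarrow> real mat"
    and Ee D K G :: "real mat"
    and P :: "nat \<Rightarrow> real mat"
    and S\<theta> :: "'s set" and \<phi> :: "'s \<Rightarrow> real vec"
    and \<beta> :: real
  assumes "0 < n" "0 < m" "0 < N"
    and M: "\<forall>k<N. M k \<in> carrier_mat (n * (n + m)) (n * (n + m)) \<and> symmetric_mat (M k)"
    and Ee: "Ee \<in> carrier_mat (n * (n + 1) div 2) (n^2)"
            "\<forall>X \<in> carrier_mat n n. Ee *\<^sub>v vecm X = vech X"
    and D: "D \<in> carrier_mat (n^2) (n * (n + 1) div 2)"
           "\<forall>Y \<in> carrier_mat n n. symmetric_mat Y \<longrightarrow> D *\<^sub>v vech Y = vecm Y"
    and \<phi>: "\<forall>\<theta> \<in> S\<theta>. \<phi> \<theta> \<in> simplex N"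
    and \<beta>: "0 < \<beta>" "\<beta> < 1"
    and K: "K \<in> carrier_mat m n"
    and G: "G \<in> carrier_mat (n * (n + 1) div 2) (n * (n + 1) div 2)"
    and P: "\<forall>k<N. pd (n * (n + 1) div 2) (P k)"
    and LMI: "\<forall>k<N. psd (2 * (n * (n + 1) div 2))
               (four_block_mat (\<beta>^2 \<cdot>\<^sub>m P k) ((Cop Ee D (Fk n m (M k) K))\<^sup>T * G)
                               (G\<^sup>T * Cop Ee D (Fk n m (M k) K)) (G\<^sup>T + G - P k))"
  shows "\<exists>\<alpha>>0. \<forall>\<theta>t \<in> \<phi> ` S\<theta>. \<forall>x :: nat \<Rightarrow> real vec.
           x 0 \<in> carrier_vec (n * (n + 1) div 2) \<longrightarrow>
           (\<forall>t. x (Suc t) = Cop Ee D (Fth n m N M \<theta>t K) *\<^sub>v x t) \<longrightarrow>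
           (\<forall>t. enorm (x t) \<le> \<alpha> * enorm (x 0) * \<beta> ^ t)"
proof -
  define d where "d = n * (n + 1) div 2"
  define A where "A = (\<lambda>k. Cop Ee D (Fk n m (M k) K))"
  have Eec: "Ee \<in> carrier_mat d (n^2)" using Ee(1) unfolding d_def .
  have Dc: "D \<in> carrier_mat (n^2) d" using D(1) unfolding d_def .
  have Gc: "G \<in> carrier_mat d d" using G unfolding d_def .
  have Pd: "\<forall>k<N. pd d (P k)" using P unfolding d_def .
  have Pc: "P k \<in> carrier_mat d d" if "k < N" for k using Pd that unfolding pd_def by blast
  have Fkc: "Fk n m (M k) K \<in> carrier_mat (n^2) (n^2)" for k by (rule Fk_carrier[OF K])
  have Ac: "A k \<in> carrier_mat d d" for k
    unfolding A_def Cop_def by (rule mult_carrier_mat[OF mult_carrier_mat[OF Eec Fkc] Dc])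
  have LMI': "psd (2 * d) (four_block_mat (\<beta>^2 \<cdot>\<^sub>m P k) ((A k)\<^sup>T * G) (G\<^sup>T * A k) (G\<^sup>T + G - P k))"
    if "k < N" for k
    using LMI that unfolding A_def d_def by blast
  obtain c C where cpos: "c > 0" and Cpos: "C > 0" and cC:
    "\<forall>k<N. \<forall>x::real vec\<in>carrier_vec d. c * (x \<bullet> x) \<le> x \<bullet> (P k *\<^sub>v x) \<and> x \<bullet> (P k *\<^sub>v x) \<le> C * (x \<bullet> x)"
    using uniform_bounds[OF Pd] by blast
  have main: "enorm (x t) \<le> sqrt (C / c) * enorm (x 0) * \<beta> ^ t"
    if th: "\<theta>t \<in> \<phi> ` S\<theta>" and x0: "x 0 \<in> carrier_vec d"
      and rec: "\<forall>t. x (Suc t) = Cop Ee D (Fth n m N M \<theta>t K) *\<^sub>v x t" for \<theta>t x t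
  proof -
    have "\<theta>t \<in> simplex N" using \<phi> th by auto
    then have thpos: "\<forall>k<N. 0 \<le> \<theta>t $ k" and thsum: "(\<Sum>k<N. \<theta>t $ k) = 1"
      unfolding simplex_def by auto
    define At where "At = Cop Ee D (Fth n m N M \<theta>t K)"
    have Fthc: "Fth n m N M \<theta>t K \<in> carrier_mat (n^2) (n^2)" unfolding Fth_def by simp
    have Atc: "At \<in> carrier_mat d d"
      unfolding At_def Cop_def by (rule mult_carrier_mat[OF mult_carrier_mat[OF Eec Fthc] Dc])
    have ent: "\<forall>i<d. \<forall>j<d. At $$ (i,j) = (\<Sum>k<N. \<theta>t $ k * A k $$ (i,j))"
    proof (intro allI impI)
      fix i j assume i: "i < d" and j: "j < d"
      have e: "\<forall>p<n^2. \<forall>q<n^2. Fth n m N M \<theta>t K $$ (p,q) = (\<Sum>k<N. \<theta>t $ k * Fk n m (M k) K $$ (p,q))"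
        unfolding Fth_def by simp
      show "At $$ (i,j) = (\<Sum>k<N. \<theta>t $ k * A k $$ (i,j))"
        unfolding At_def A_def Cop_def
        by (rule cop_lin[OF Eec Dc Fthc _ e i j]) (use Fkc in blast)
    qed
    have xc: "x s \<in> carrier_vec d" for s
    proof (induction s)
      case 0 show ?case by (rule x0)
    next
      case (Suc s)
      have "x (Suc s) = At *\<^sub>v x s" using rec unfolding At_def by blast
      then show ?case using Atc Suc by simp
    qed
    define V where "V = (\<lambda>y. \<Sum>k<N. \<theta>t $ k * (y \<bullet> (P k *\<^sub>v y)))"
    have Vb: "c * (y \<bullet> y) \<le> V y \<and> V y \<le> C * (y \<bullet> y)" if y: "y \<in> carrier_vec d" for y
    proof
      have "c * (y \<bullet> y) = (\<Sum>k<N. \<theta>t $ k * (c * (y \<bullet> y)))"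
        using thsum by (simp add: sum_distrib_right[symmetric])
      also have "\<dots> \<le> V y" unfolding V_def
        using cC thpos y by (intro sum_mono mult_left_mono) auto
      finally show "c * (y \<bullet> y) \<le> V y" .
      have "V y \<le> (\<Sum>k<N. \<theta>t $ k * (C * (y \<bullet> y)))" unfolding V_def
        using cC thpos y by (intro sum_mono mult_left_mono) auto
      also have "\<dots> = C * (y \<bullet> y)"
        using thsum by (simp add: sum_distrib_right[symmetric])
      finally show "V y \<le> C * (y \<bullet> y)" .
    qed
    have Vdec: "V (At *\<^sub>v u) \<le> \<beta>^2 * V u" if u: "u \<in> carrier_vec d" for u
    proof -
      define w where "w = At *\<^sub>v u"
      have wc: "w \<in> carrier_vec d" using Atc u unfolding w_def by simp
      define v where "v = - w"
      have vc: "v \<in> carrier_vec d" using wc unfolding v_def by simp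
      have Gvc: "G *\<^sub>v v \<in> carrier_vec d" using Gc vc by simp
      have key: "0 \<le> \<beta>^2 * (u \<bullet> (P k *\<^sub>v u)) + 2 * bil d (A k) (G *\<^sub>v v) u + 2 * (v \<bullet> (G *\<^sub>v v)) - v \<bullet> (P k *\<^sub>v v)"
        if k: "k < N" for k
      proof -
        have z: "u @\<^sub>v v \<in> carrier_vec (2 * d)" using u vc by (simp add: mult_2)
        have "0 \<le> (u @\<^sub>v v) \<bullet> (four_block_mat (\<beta>^2 \<cdot>\<^sub>m P k) ((A k)\<^sup>T * G) (G\<^sup>T * A k) (G\<^sup>T + G - P k) *\<^sub>v (u @\<^sub>v v))"
          using LMI'[OF k] z unfolding psd_def by blast
        also have "\<dots> = \<beta>^2 * (u \<bullet> (P k *\<^sub>v u)) + 2 * ((G *\<^sub>v v) \<bullet> (A k *\<^sub>v u)) + 2 * (v \<bullet> (G *\<^sub>v v)) - v \<bullet> (P k *\<^sub>v v)"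
          by (rule lmi_expand[OF Pc[OF k] Ac Gc u vc])
        also have "(G *\<^sub>v v) \<bullet> (A k *\<^sub>v u) = bil d (A k) (G *\<^sub>v v) u"
          by (rule bil_eq[OF Ac Gvc u])
        finally show ?thesis .
      qed
      have "0 \<le> (\<Sum>k<N. \<theta>t $ k * (\<beta>^2 * (u \<bullet> (P k *\<^sub>v u)) + 2 * bil d (A k) (G *\<^sub>v v) u + 2 * (v \<bullet> (G *\<^sub>v v)) - v \<bullet> (P k *\<^sub>v v)))"
        using key thpos by (intro sum_nonneg mult_nonneg_nonneg) auto
      also have "\<dots> = \<beta>^2 * V u + 2 * (\<Sum>k<N. \<theta>t $ k * bil d (A k) (G *\<^sub>v v) u)
           + 2 * (v \<bullet> (G *\<^sub>v v)) * (\<Sum>k<N. \<theta>t $ k) - V v"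
        unfolding V_def
        by (simp add: algebra_simps sum.distrib sum_subtractf sum_distrib_left sum_distrib_right)
      also have "(\<Sum>k<N. \<theta>t $ k * bil d (A k) (G *\<^sub>v v) u) = bil d At (G *\<^sub>v v) u"
        using bil_lin[OF ent] by simp
      also have "bil d At (G *\<^sub>v v) u = (G *\<^sub>v v) \<bullet> w"
        unfolding w_def by (rule bil_eq[OF Atc Gvc u, symmetric])
      also have "(G *\<^sub>v v) \<bullet> w = w \<bullet> (G *\<^sub>v v)" by (rule comm_scalar_prod[OF Gvc wc])
      also have "w \<bullet> (G *\<^sub>v v) = - bil d G w w"
      proof -
        have "w \<bullet> (G *\<^sub>v v) = bil d G w v" by (rule bil_eq[OF Gc wc vc])
        also have "\<dots> = - bil d G w w" unfolding v_def by (rule bil_neg1[OF wc])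
        finally show ?thesis .
      qed
      also have "v \<bullet> (G *\<^sub>v v) = bil d G w w"
      proof -
        have "v \<bullet> (G *\<^sub>v v) = bil d G v v" by (rule bil_eq[OF Gc vc vc])
        also have "\<dots> = bil d G w w" unfolding v_def by (rule bil_neg2[OF wc])
        finally show ?thesis .
      qed
      also have "V v = V w" unfolding V_def
      proof (intro sum.cong refl arg_cong2[where f="(*)"])
        fix k assume "k \<in> {..<N}"
        then have Pk: "P k \<in> carrier_mat d d" using Pc by simp
        have "v \<bullet> (P k *\<^sub>v v) = bil d (P k) v v" by (rule bil_eq[OF Pk vc vc])
        also have "\<dots> = bil d (P k) w w" unfolding v_def by (rule bil_neg2[OF wc])
        also have "\<dots> = w \<bullet> (P k *\<^sub>v w)" by (rule bil_eq[OF Pk wc wc, symmetric])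
        finally show "v \<bullet> (P k *\<^sub>v v) = w \<bullet> (P k *\<^sub>v w)" .
      qed
      finally have "0 \<le> \<beta>^2 * V u - V w" using thsum by simp
      then show ?thesis unfolding w_def by simp
    qed
    have Vt: "V (x s) \<le> (\<beta>^2)^s * V (x 0)" for s
    proof (induction s)
      case 0 show ?case by simp
    next
      case (Suc s)
      have "V (x (Suc s)) = V (At *\<^sub>v x s)" using rec unfolding At_def by simp
      also have "\<dots> \<le> \<beta>^2 * V (x s)" by (rule Vdec[OF xc])
      also have "\<dots> \<le> \<beta>^2 * ((\<beta>^2)^s * V (x 0))" using Suc by (intro mult_left_mono) auto
      finally show ?case by simp
    qed
    have x0x: "0 \<le> x 0 \<bullet> x 0" by (rule self_scalar_nonneg[OF xc])
    have "c * (x t \<bullet> x t) \<le> V (x t)" using Vb[OF xc] by blast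
    also have "\<dots> \<le> (\<beta>^2)^t * V (x 0)" by (rule Vt)
    also have "\<dots> \<le> (\<beta>^2)^t * (C * (x 0 \<bullet> x 0))" using Vb[OF xc] by (intro mult_left_mono) auto
    finally have "c * (x t \<bullet> x t) \<le> (\<beta>^2)^t * (C * (x 0 \<bullet> x 0))" .
    then have "x t \<bullet> x t \<le> (C / c) * (x 0 \<bullet> x 0) * (\<beta>^t)^2"
      using cpos by (simp add: field_simps power_mult[symmetric] power_mult_distrib mult.commute)
    then have "sqrt (x t \<bullet> x t) \<le> sqrt ((C / c) * (x 0 \<bullet> x 0) * (\<beta>^t)^2)"
      by (rule real_sqrt_le_mono)
    also have "\<dots> = sqrt (C / c) * sqrt (x 0 \<bullet> x 0) * sqrt ((\<beta>^t)^2)"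
      by (simp only: real_sqrt_mult)
    also have "sqrt ((\<beta>^t)^2) = \<beta>^t" using \<beta>(1) by simp
    finally show ?thesis unfolding enorm_def .
  qed
  show ?thesis
  proof (rule exI[of _ "sqrt (C / c)"], rule conjI)
    show "0 < sqrt (C / c)" using cpos Cpos by simp
    show "\<forall>\<theta>t\<in>\<phi> ` S\<theta>. \<forall>x :: nat \<Rightarrow> real vec. x 0 \<in> carrier_vec (n * (n + 1) div 2) \<longrightarrow>
           (\<forall>t. x (Suc t) = Cop Ee D (Fth n m N M \<theta>t K) *\<^sub>v x t) \<longrightarrow>
           (\<forall>t. enorm (x t) \<le> sqrt (C / c) * enorm (x 0) * \<beta> ^ t)"
      using main unfolding d_def by blast
  qed
qed

end
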